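(* Let $\alpha\in\{0,1\}$, $u\geqslant 1$ and $b\geqslant 16u-1$ be integers. There exists a set $\mathfrak{A}$ of $2u$ integer $3\times 3$ matrices such that the multiset of absolute values of all entries of all matrices in $\mathfrak{A}$ is exactly the set $$[1,16u-1]_2\cup[2,8u-2]_4\cup[b+1,b+4u]\cup[b+10u+1,b+12u]\cup[b+16u+1,b+18u]$$ (each element occurring once), and for every $A\in\mathfrak{A}$ one has $\sigma_r(A)=(0,0,0)$ and $\sigma_c(A)=(4\alpha,-2\alpha,-2\alpha)$.
   Context: For integers $a\equiv b\pmod d$ with $d\geqslant1$, $[a,b]_d=\{a+id: 0\leqslant i\leqslant (b-a)/d\}$ if $a\leqslant b$ and $[a,b]_d=\varnothing$ if $a>b$; $[a,b]=[a,b]_1$. For a matrix $A$, $\sigma_r(A)$ is the sequence of its row sums (top to bottom) and $\sigma_c(A)$ the sequence of its column sums (left to right). *)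

theory Defs
  imports "HOL-Analysis.Analysis" "HOL-Library.Multiset"
begin

definition step_interval :: "int \<Rightarrow> int \<Rightarrow> int \<Rightarrow> int set" where
  "step_interval a b d = (if a \<le> b then {a + i * d | i. 0 \<le> i \<and> i \<le> (b - a) div d} else {})"

definition abs_entries :: "int^3^3 \<Rightarrow> int multiset" where
  "abs_entries A = image_mset (\<lambda>(i, j). \<bar>A $ i $ j\<bar>) (mset_set (UNIV :: (3 \<times> 3) set))"

definition row_sums :: "int^3^3 \<Rightarrow> int list" where
  "row_sums A = map (\<lambda>i. \<Sum>j\<in>UNIV. A $ i $ j) [0, 1, 2 :: 3]"

definition col_sums :: "int^3^3 \<Rightarrow> int list" where
  "col_sums A = map (\<lambda>j. \<Sum>i\<in>UNIV. A $ i $ j) [0, 1, 2 :: 3]"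

end

theory Submission imports Defs begin

definition m3 :: "int \<Rightarrow> int \<Rightarrow> int \<Rightarrow> int \<Rightarrow> int \<Rightarrow> int \<Rightarrow> int \<Rightarrow> int \<Rightarrow> int \<Rightarrow> int^3^3" where
 "m3 a b c d e f g h k = (\<chi> i j. if i = 0 then (if j = 0 then a else if j = 1 then b else c)
    else if i = 1 then (if j = 0 then d else if j = 1 then e else f)
    else (if j = 0 then g else if j = 1 then h else k))"

lemma three0: "(3::3) = 0" by simp
lemma univ3: "(UNIV::3 set) = {0,1,2}"
  using UNIV_3 three0 by auto
lemma sum3: "sum f (UNIV::3 set) = f 0 + f 1 + f 2"
  unfolding univ3 by (simp add: ac_simps)
lemma m3_rows: "row_sums (m3 a b c d e f g h k) = [a+b+c, d+e+f, g+h+k]"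
  by (simp add: row_sums_def sum3 m3_def)
lemma m3_cols: "col_sums (m3 a b c d e f g h k) = [a+d+g, b+e+h, c+f+k]"
  by (simp add: col_sums_def sum3 m3_def)
lemma univ33: "(UNIV::(3\<times>3) set) = set [(0,0),(0,1),(0,2),(1,0),(1,1),(1,2),(2,0),(2,1),(2,2)]"
  using univ3 by auto
lemma m3_abs: "abs_entries (m3 a b c d e f g h k) = {#\<bar>a\<bar>,\<bar>b\<bar>,\<bar>c\<bar>,\<bar>d\<bar>,\<bar>e\<bar>,\<bar>f\<bar>,\<bar>g\<bar>,\<bar>h\<bar>,\<bar>k\<bar>#}"
  unfolding abs_entries_def univ33
  apply (subst mset_set_set)
   apply simp
  apply (simp add: m3_def)
  done
lemma m3_00: "m3 a b c d e f g h k $ 0 $ 0 = a" by (simp add: m3_def)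

definition matA :: "int \<Rightarrow> int \<Rightarrow> int \<Rightarrow> int \<Rightarrow> int^3^3" where
 "matA al b u i = m3 (4*i-1) (b+2*u+1-2*i) (-(b+2*u+2*i)) (4*i-8*u-1) (-(b+10*u+2*i)) (b+18*u+1-2*i)
     (4*al+8*u+2-8*i) (8*u-1+4*i-2*al) (4*i-16*u-1-2*al)"
definition matB :: "int \<Rightarrow> int \<Rightarrow> int \<Rightarrow> int \<Rightarrow> int^3^3" where
 "matB al b u i = m3 (4*i-4*u-1) (b+4*u+1-2*i) (-(b+2*i)) (4*u+4*i-1) (-(b+16*u+2*i)) (b+12*u+1-2*i)
     (4*al+2-8*i) (12*u-1+4*i-2*al) (4*i-12*u-1-2*al)"
definition vals :: "int \<Rightarrow> int \<Rightarrow> int \<Rightarrow> int \<Rightarrow> int list" where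
 "vals al b u i = [4*i-1, b+2*u+1-2*i, b+2*u+2*i, 8*u+1-4*i, b+10*u+2*i, b+18*u+1-2*i,
    8*u+2+4*al-8*i, 8*u-1+4*i-2*al, 16*u+1+2*al-4*i,
    4*u+1-4*i, b+4*u+1-2*i, b+2*i, 4*u+4*i-1, b+16*u+2*i, b+12*u+1-2*i,
    8*i-2-4*al, 12*u-1+4*i-2*al, 12*u+1+2*al-4*i]"

lemma A_rc: "row_sums (matA al b u i) = [0,0,0] \<and> col_sums (matA al b u i) = [4*al, -2*al, -2*al]"
  by (simp add: matA_def m3_rows m3_cols algebra_simps)
lemma B_rc: "row_sums (matB al b u i) = [0,0,0] \<and> col_sums (matB al b u i) = [4*al, -2*al, -2*al]"
  by (simp add: matB_def m3_rows m3_cols algebra_simps)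

lemma step_mem:
  assumes "d > 0"
  shows "step_interval a b d = {x. a \<le> x \<and> x \<le> b \<and> d dvd (x - a)}"
proof (cases "a \<le> b")
  case True
  show ?thesis
  proof (rule set_eqI, rule iffI)
    fix x assume "x \<in> step_interval a b d"
    then obtain j where j: "0 \<le> j" "j \<le> (b-a) div d" "x = a + j*d"
      using True by (auto simp: step_interval_def)
    have "j*d \<le> ((b-a) div d)*d" using j assms by (intro mult_right_mono) auto
    also have "\<dots> \<le> b - a" using minus_mod_eq_div_mult[of "b-a" d] pos_mod_sign[of d "b-a"] assms by linarith
    finally show "x \<in> {x. a \<le> x \<and> x \<le> b \<and> d dvd (x - a)}" using j assms by simp
  next
    fix x assume "x \<in> {x. a \<le> x \<and> x \<le> b \<and> d dvd (x - a)}"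
    then have x: "a \<le> x" "x \<le> b" "d dvd (x-a)" by auto
    then obtain j where j: "x - a = d * j" by (auto elim: dvdE)
    have "0 \<le> j" using j x assms by (metis diff_ge_0_iff_ge zero_le_mult_iff not_less)
    moreover have "j \<le> (b-a) div d"
    proof -
      have "(x - a) div d \<le> (b-a) div d" using x assms by (simp add: zdiv_mono1)
      then show ?thesis using j assms by simp
    qed
    ultimately show "x \<in> step_interval a b d" using True j
      by (auto simp: step_interval_def intro!: exI[of _ j] simp: algebra_simps)
  qed
next
  case False
  then show ?thesis by (auto simp: step_interval_def)
qed

lemma step_card:
  assumes "d > 0" "a \<le> b"
  shows "card (step_interval a b d) = nat ((b-a) div d + 1)"
proof -
  have "step_interval a b d = (\<lambda>j. a + j*d) ` {0..(b-a) div d}"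
    using assms by (auto simp: step_interval_def)
  moreover have "inj_on (\<lambda>j. a + j*d) {0..(b-a) div d}"
    using assms by (auto simp: inj_on_def)
  ultimately show ?thesis by (simp add: card_image)
qed

lemma mset_eq_mset_set:
  assumes "finite S" "set_mset M = S" "size M = card S"
  shows "M = mset_set S"
proof -
  have sz: "size M = (\<Sum>x\<in>S. count M x)"
    using assms(2) by (simp add: size_multiset_overloaded_eq)
  have ge: "\<forall>x\<in>S. 1 \<le> count M x" using assms(2) by auto
  have c1: "\<forall>x\<in>S. count M x = 1"
  proof (rule ccontr)
    assume "\<not> (\<forall>x\<in>S. count M x = 1)"
    then obtain y where y: "y \<in> S" "count M y \<noteq> 1" by auto
    have "(\<Sum>x\<in>S. (1::nat)) < (\<Sum>x\<in>S. count M x)"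
      proof (rule sum_strict_mono_ex1[OF assms(1)])
      show "\<forall>x\<in>S. 1 \<le> count M x" using ge .
      have "1 \<le> count M y" using ge y by blast
      then have "1 < count M y" using y(2) by linarith
      then show "\<exists>a\<in>S. 1 < count M a" using y(1) by blast
    qed
    then show False using sz assms(3) by simp
  qed
  show ?thesis
  proof (rule multiset_eqI)
    fix x show "count M x = count (mset_set S) x"
      using c1 assms(1,2) by (cases "x \<in> S") (auto simp: count_mset_set not_in_iff)
  qed
qed


lemma absAB:
  assumes "0 \<le> al" "al \<le> 1" "1 \<le> i" "i \<le> u" "b \<ge> 16*u-1"
  shows "abs_entries (matA al b u i) + abs_entries (matB al b u i) = mset (vals al b u i)"
proof -
  have "\<bar>4*i-1\<bar> = 4*i-1" "\<bar>b+2*u+1-2*i\<bar> = b+2*u+1-2*i" "\<bar>-(b+2*u+2*i)\<bar> = b+2*u+2*i"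
    "\<bar>4*i-8*u-1\<bar> = 8*u+1-4*i" "\<bar>-(b+10*u+2*i)\<bar> = b+10*u+2*i" "\<bar>b+18*u+1-2*i\<bar> = b+18*u+1-2*i"
    "\<bar>4*al+8*u+2-8*i\<bar> = 8*u+2+4*al-8*i" "\<bar>8*u-1+4*i-2*al\<bar> = 8*u-1+4*i-2*al"
    "\<bar>4*i-16*u-1-2*al\<bar> = 16*u+1+2*al-4*i"
    "\<bar>4*i-4*u-1\<bar> = 4*u+1-4*i" "\<bar>b+4*u+1-2*i\<bar> = b+4*u+1-2*i" "\<bar>-(b+2*i)\<bar> = b+2*i"
    "\<bar>4*u+4*i-1\<bar> = 4*u+4*i-1" "\<bar>-(b+16*u+2*i)\<bar> = b+16*u+2*i" "\<bar>b+12*u+1-2*i\<bar> = b+12*u+1-2*i"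
    "\<bar>4*al+2-8*i\<bar> = 8*i-2-4*al" "\<bar>12*u-1+4*i-2*al\<bar> = 12*u-1+4*i-2*al"
    "\<bar>4*i-12*u-1-2*al\<bar> = 12*u+1+2*al-4*i"
    using assms by linarith+
  then show ?thesis
    unfolding matA_def matB_def m3_abs vals_def
    by (simp only: mset.simps union_mset_add_mset_left add_0_left)
qed

definition Rs :: "int \<Rightarrow> int \<Rightarrow> int set" where
  "Rs u b = (step_interval 1 (16 * u - 1) 2 \<union> step_interval 2 (8 * u - 2) 4 \<union> step_interval (b + 1) (b + 4 * u) 1 \<union> step_interval (b + 10 * u + 1) (b + 12 * u) 1 \<union> step_interval (b + 16 * u + 1) (b + 18 * u) 1)"
definition V :: "int \<Rightarrow> int \<Rightarrow> int \<Rightarrow> int set" where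
  "V al b u = (\<Union>i\<in>{1..u}. set (vals al b u i))"

lemma in1: "1 \<le> x \<Longrightarrow> x \<le> 16*u-1 \<Longrightarrow> 2 dvd (x-1) \<Longrightarrow> x \<in> Rs u b"
  unfolding Rs_def by (simp add: step_mem)
lemma in2: "2 \<le> x \<Longrightarrow> x \<le> 8*u-2 \<Longrightarrow> 4 dvd (x-2) \<Longrightarrow> x \<in> Rs u b"
  unfolding Rs_def by (simp add: step_mem)
lemma in3: "b+1 \<le> x \<Longrightarrow> x \<le> b+4*u \<Longrightarrow> x \<in> Rs u b"
  unfolding Rs_def by (simp add: step_mem)
lemma in4: "b+10*u+1 \<le> x \<Longrightarrow> x \<le> b+12*u \<Longrightarrow> x \<in> Rs u b"
  unfolding Rs_def by (simp add: step_mem)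
lemma in5: "b+16*u+1 \<le> x \<Longrightarrow> x \<le> b+18*u \<Longrightarrow> x \<in> Rs u b"
  unfolding Rs_def by (simp add: step_mem)

lemma vals_in:
  assumes "0 \<le> al" "al \<le> 1" "1 \<le> i" "i \<le> u" "b \<ge> 16*u-1"
  shows "set (vals al b u i) \<subseteq> Rs u b"
  using assms unfolding vals_def
  apply (simp only: list.set insert_subset empty_subsetI)
  apply (intro conjI)
  subgoal by (rule in1) (linarith | presburger)+
  subgoal by (rule in3) (linarith | presburger)+
  subgoal by (rule in3) (linarith | presburger)+
  subgoal by (rule in1) (linarith | presburger)+
  subgoal by (rule in4) (linarith | presburger)+
  subgoal by (rule in5) (linarith | presburger)+
  subgoal by (rule in2) (linarith | presburger)+
  subgoal by (rule in1) (linarith | presburger)+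
  subgoal by (rule in1) (linarith | presburger)+
  subgoal by (rule in1) (linarith | presburger)+
  subgoal by (rule in3) (linarith | presburger)+
  subgoal by (rule in3) (linarith | presburger)+
  subgoal by (rule in1) (linarith | presburger)+
  subgoal by (rule in5) (linarith | presburger)+
  subgoal by (rule in4) (linarith | presburger)+
  subgoal by (rule in2) (linarith | presburger)+
  subgoal by (rule in1) (linarith | presburger)+
  subgoal by (rule in1) (linarith | presburger)+
  apply (rule TrueI)
  done

lemma V_in: "0 \<le> al \<Longrightarrow> al \<le> 1 \<Longrightarrow> b \<ge> 16*u-1 \<Longrightarrow> V al b u \<subseteq> Rs u b"
  unfolding V_def using vals_in by fastforce

lemma viaf: "\<exists>i. 1 \<le> i \<and> i \<le> u \<and> x = f i \<Longrightarrow> (\<And>i. f i \<in> set (vals al b u i)) \<Longrightarrow> x \<in> V al b u"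
  unfolding V_def by fastforce
lemma cov1_0:
  assumes u: "u \<ge> 1" and h: "1 \<le> x" "x \<le> 16*u-1" "2 dvd (x-1)"
  shows "x \<in> V 0 b u"
proof -
  have c0: "x \<in> V 0 b u" if "x mod 4 = 3" "x \<le> 4*u-1"
    by (rule viaf[where f="\<lambda>i. 4*i-1"]) (use that u h in presburger, simp add: vals_def)
  have c1: "x \<in> V 0 b u" if "x mod 4 = 3" "4*u \<le> x" "x \<le> 8*u-1"
    by (rule viaf[where f="\<lambda>i. 4*u+4*i-1"]) (use that u h in presburger, simp add: vals_def)
  have c2: "x \<in> V 0 b u" if "x mod 4 = 3" "8*u \<le> x" "x \<le> 12*u-1"
    by (rule viaf[where f="\<lambda>i. 8*u-1+4*i-2*0"]) (use that u h in presburger, simp add: vals_def)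
  have c3: "x \<in> V 0 b u" if "x mod 4 = 3" "12*u \<le> x"
    by (rule viaf[where f="\<lambda>i. 12*u-1+4*i-2*0"]) (use that u h in presburger, simp add: vals_def)
  have c4: "x \<in> V 0 b u" if "x mod 4 = 1" "x \<le> 4*u-1"
    by (rule viaf[where f="\<lambda>i. 4*u+1-4*i"]) (use that u h in presburger, simp add: vals_def)
  have c5: "x \<in> V 0 b u" if "x mod 4 = 1" "4*u \<le> x" "x \<le> 8*u-1"
    by (rule viaf[where f="\<lambda>i. 8*u+1-4*i"]) (use that u h in presburger, simp add: vals_def)
  have c6: "x \<in> V 0 b u" if "x mod 4 = 1" "8*u \<le> x" "x \<le> 12*u-1"
    by (rule viaf[where f="\<lambda>i. 12*u+1+2*0-4*i"]) (use that u h in presburger, simp add: vals_def)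
  have c7: "x \<in> V 0 b u" if "x mod 4 = 1" "12*u \<le> x"
    by (rule viaf[where f="\<lambda>i. 16*u+1+2*0-4*i"]) (use that u h in presburger, simp add: vals_def)
  have m: "x mod 4 = 1 \<or> x mod 4 = 3" using h by presburger
  consider "x \<le> 4*u-1" | "4*u \<le> x" "x \<le> 8*u-1" | "8*u \<le> x" "x \<le> 12*u-1" | "12*u \<le> x" by linarith
  then show ?thesis
    using m c0 c1 c2 c3 c4 c5 c6 c7 by cases metis+
qed
lemma cov2_0:
  assumes u: "u \<ge> 1" and h: "2 \<le> x" "x \<le> 8*u-2" "4 dvd (x-2)"
  shows "x \<in> V 0 b u"
proof -
  have c0: "x \<in> V 0 b u" if "x mod 8 = 2"
    by (rule viaf[where f="\<lambda>i. 8*u+2+4*0-8*i"]) (use that u h in presburger, simp add: vals_def)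
  have c1: "x \<in> V 0 b u" if "x mod 8 = 6"
    by (rule viaf[where f="\<lambda>i. 8*i-2-4*0"]) (use that u h in presburger, simp add: vals_def)
  have m: "x mod 8 = 2 \<or> x mod 8 = 6" using h by presburger
  show ?thesis
    using m c0 c1 by metis
qed
lemma cov1_1:
  assumes u: "u \<ge> 1" and h: "1 \<le> x" "x \<le> 16*u-1" "2 dvd (x-1)"
  shows "x \<in> V 1 b u"
proof -
  have c0: "x \<in> V 1 b u" if "x mod 4 = 3" "x \<le> 4*u-1"
    by (rule viaf[where f="\<lambda>i. 4*i-1"]) (use that u h in presburger, simp add: vals_def)
  have c1: "x \<in> V 1 b u" if "x mod 4 = 3" "4*u \<le> x" "x \<le> 8*u-1"
    by (rule viaf[where f="\<lambda>i. 4*u+4*i-1"]) (use that u h in presburger, simp add: vals_def)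
  have c2: "x \<in> V 1 b u" if "x mod 4 = 3" "8*u \<le> x" "x \<le> 12*u-1"
    by (rule viaf[where f="\<lambda>i. 12*u+1+2*1-4*i"]) (use that u h in presburger, simp add: vals_def)
  have c3: "x \<in> V 1 b u" if "x mod 4 = 3" "12*u \<le> x"
    by (rule viaf[where f="\<lambda>i. 16*u+1+2*1-4*i"]) (use that u h in presburger, simp add: vals_def)
  have c4: "x \<in> V 1 b u" if "x mod 4 = 1" "x \<le> 4*u-1"
    by (rule viaf[where f="\<lambda>i. 4*u+1-4*i"]) (use that u h in presburger, simp add: vals_def)
  have c5: "x \<in> V 1 b u" if "x mod 4 = 1" "4*u \<le> x" "x \<le> 8*u-1"
    by (rule viaf[where f="\<lambda>i. 8*u+1-4*i"]) (use that u h in presburger, simp add: vals_def)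
  have c6: "x \<in> V 1 b u" if "x mod 4 = 1" "8*u \<le> x" "x \<le> 12*u-1"
    by (rule viaf[where f="\<lambda>i. 8*u-1+4*i-2*1"]) (use that u h in presburger, simp add: vals_def)
  have c7: "x \<in> V 1 b u" if "x mod 4 = 1" "12*u \<le> x"
    by (rule viaf[where f="\<lambda>i. 12*u-1+4*i-2*1"]) (use that u h in presburger, simp add: vals_def)
  have m: "x mod 4 = 1 \<or> x mod 4 = 3" using h by presburger
  consider "x \<le> 4*u-1" | "4*u \<le> x" "x \<le> 8*u-1" | "8*u \<le> x" "x \<le> 12*u-1" | "12*u \<le> x" by linarith
  then show ?thesis
    using m c0 c1 c2 c3 c4 c5 c6 c7 by cases metis+
qed
lemma cov2_1:
  assumes u: "u \<ge> 1" and h: "2 \<le> x" "x \<le> 8*u-2" "4 dvd (x-2)"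
  shows "x \<in> V 1 b u"
proof -
  have c0: "x \<in> V 1 b u" if "x mod 8 = 2"
    by (rule viaf[where f="\<lambda>i. 8*i-2-4*1"]) (use that u h in presburger, simp add: vals_def)
  have c1: "x \<in> V 1 b u" if "x mod 8 = 6"
    by (rule viaf[where f="\<lambda>i. 8*u+2+4*1-8*i"]) (use that u h in presburger, simp add: vals_def)
  have m: "x mod 8 = 2 \<or> x mod 8 = 6" using h by presburger
  show ?thesis
    using m c0 c1 by metis
qed
lemma cov3:
  assumes u: "u \<ge> 1" and h: "b+1 \<le> x" "x \<le> b+4*u"
  shows "x \<in> V al b u"
proof -
  have c0: "x \<in> V al b u" if "(x-b) mod 2 = 1" "x \<le> b+2*u"
    by (rule viaf[where f="\<lambda>i. b+2*u+1-2*i"]) (use that u h in presburger, simp add: vals_def)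
  have c1: "x \<in> V al b u" if "(x-b) mod 2 = 1" "\<not> x \<le> b+2*u"
    by (rule viaf[where f="\<lambda>i. b+4*u+1-2*i"]) (use that u h in presburger, simp add: vals_def)
  have c2: "x \<in> V al b u" if "(x-b) mod 2 = 0" "x \<le> b+2*u"
    by (rule viaf[where f="\<lambda>i. b+2*i"]) (use that u h in presburger, simp add: vals_def)
  have c3: "x \<in> V al b u" if "(x-b) mod 2 = 0" "\<not> x \<le> b+2*u"
    by (rule viaf[where f="\<lambda>i. b+2*u+2*i"]) (use that u h in presburger, simp add: vals_def)
  have m: "(x-b) mod 2 = 0 \<or> (x-b) mod 2 = 1" by presburger
  show ?thesis
    using m c0 c1 c2 c3 by (cases "x \<le> b+2*u") metis+
qed
lemma cov4:
  assumes u: "u \<ge> 1" and h: "b+10*u+1 \<le> x" "x \<le> b+12*u"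
  shows "x \<in> V al b u"
proof -
  have c0: "x \<in> V al b u" if "(x-b) mod 2 = 0"
    by (rule viaf[where f="\<lambda>i. b+10*u+2*i"]) (use that u h in presburger, simp add: vals_def)
  have c1: "x \<in> V al b u" if "(x-b) mod 2 = 1"
    by (rule viaf[where f="\<lambda>i. b+12*u+1-2*i"]) (use that u h in presburger, simp add: vals_def)
  have m: "(x-b) mod 2 = 0 \<or> (x-b) mod 2 = 1" by presburger
  show ?thesis
    using m c0 c1 by metis
qed
lemma cov5:
  assumes u: "u \<ge> 1" and h: "b+16*u+1 \<le> x" "x \<le> b+18*u"
  shows "x \<in> V al b u"
proof -
  have c0: "x \<in> V al b u" if "(x-b) mod 2 = 1"
    by (rule viaf[where f="\<lambda>i. b+18*u+1-2*i"]) (use that u h in presburger, simp add: vals_def)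
  have c1: "x \<in> V al b u" if "(x-b) mod 2 = 0"
    by (rule viaf[where f="\<lambda>i. b+16*u+2*i"]) (use that u h in presburger, simp add: vals_def)
  have m: "(x-b) mod 2 = 0 \<or> (x-b) mod 2 = 1" by presburger
  show ?thesis
    using m c0 c1 by metis
qed

lemma step_fin: "finite (step_interval a b d)"
proof -
  have "{a + i*d | i. 0 \<le> i \<and> i \<le> (b-a) div d} = (\<lambda>i. a+i*d) ` {0..(b-a) div d}" by auto
  then show ?thesis unfolding step_interval_def by simp
qed

lemma Rs_fin: "finite (Rs u b)"
  unfolding Rs_def by (simp add: step_fin)

lemma Rs_card:
  assumes u: "u \<ge> 1" and hb: "b \<ge> 16*u-1"
  shows "card (Rs u b) = 18 * nat u"
proof -
  let ?I1 = "step_interval 1 (16 * u - 1) 2"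
  let ?I2 = "step_interval 2 (8 * u - 2) 4"
  let ?I3 = "step_interval (b + 1) (b + 4 * u) 1"
  let ?I4 = "step_interval (b + 10 * u + 1) (b + 12 * u) 1"
  let ?I5 = "step_interval (b + 16 * u + 1) (b + 18 * u) 1"
  have c1: "card ?I1 = nat (8*u)"
  proof -
    have "(16 * u - 1 - 1) div 2 = 8*u - 1" by presburger
    then show ?thesis using u by (subst step_card) simp_all
  qed
  have c2: "card ?I2 = nat (2*u)"
  proof -
    have "(8 * u - 2 - 2) div 4 = 2*u - 1" by presburger
    then show ?thesis using u by (subst step_card) simp_all
  qed
  have c3: "card ?I3 = nat (4*u)" using u by (subst step_card) simp_all
  have c4: "card ?I4 = nat (2*u)" using u by (subst step_card) simp_all
  have c5: "card ?I5 = nat (2*u)" using u by (subst step_card) simp_all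
  have np: "\<forall>x::int. \<not> (2 dvd (x-1) \<and> 4 dvd (x-2))" by presburger
  have d12: "?I1 \<inter> ?I2 = {}" using np by (auto simp: step_mem)
  have d3: "(?I1 \<union> ?I2) \<inter> ?I3 = {}" using hb by (auto simp: step_mem)
  have d4: "(?I1 \<union> ?I2 \<union> ?I3) \<inter> ?I4 = {}" using hb u by (auto simp: step_mem)
  have d5: "(?I1 \<union> ?I2 \<union> ?I3 \<union> ?I4) \<inter> ?I5 = {}" using hb u by (auto simp: step_mem)
  have "card (Rs u b) = card ?I1 + card ?I2 + card ?I3 + card ?I4 + card ?I5"
    unfolding Rs_def
    by (simp add: card_Un_disjoint step_fin d12 d3 d4 d5)
  also have "\<dots> = 18 * nat u" using u c1 c2 c3 c4 c5 by (simp add: nat_mult_distrib)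
  finally show ?thesis .
qed

theorem lemma2p1:
  fixes \<alpha> u b :: int
  assumes "\<alpha> \<in> {0, 1}" and "u \<ge> 1" and "b \<ge> 16 * u - 1"
  shows "\<exists>\<AA> :: (int^3^3) set. finite \<AA> \<and> card \<AA> = nat (2 * u) \<and>
    (\<Sum>A\<in>\<AA>. abs_entries A) =
      mset_set (step_interval 1 (16 * u - 1) 2 \<union> step_interval 2 (8 * u - 2) 4
        \<union> step_interval (b + 1) (b + 4 * u) 1 \<union> step_interval (b + 10 * u + 1) (b + 12 * u) 1
        \<union> step_interval (b + 16 * u + 1) (b + 18 * u) 1) \<and>
    (\<forall>A\<in>\<AA>. row_sums A = [0, 0, 0] \<and> col_sums A = [4 * \<alpha>, -2 * \<alpha>, -2 * \<alpha>])"
proof -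
  have al: "\<alpha> = 0 \<or> \<alpha> = 1" using assms(1) by auto
  have al0: "0 \<le> \<alpha>" "\<alpha> \<le> 1" using assms(1) by auto
  have u: "u \<ge> 1" and hb: "b \<ge> 16*u-1" using assms by auto
  define AA where "AA = matA \<alpha> b u ` {1..u} \<union> matB \<alpha> b u ` {1..u}"
  have injA: "inj_on (matA \<alpha> b u) {1..u}"
  proof (rule inj_onI)
    fix x y assume "x \<in> {1..u}" "y \<in> {1..u}" "matA \<alpha> b u x = matA \<alpha> b u y"
    then have "matA \<alpha> b u x $ 0 $ 0 = matA \<alpha> b u y $ 0 $ 0" by simp
    then show "x = y" by (simp add: matA_def m3_00)
  qed
  have injB: "inj_on (matB \<alpha> b u) {1..u}"
  proof (rule inj_onI)
    fix x y assume "x \<in> {1..u}" "y \<in> {1..u}" "matB \<alpha> b u x = matB \<alpha> b u y"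
    then have "matB \<alpha> b u x $ 0 $ 0 = matB \<alpha> b u y $ 0 $ 0" by simp
    then show "x = y" by (simp add: matB_def m3_00)
  qed
  have disj: "matA \<alpha> b u ` {1..u} \<inter> matB \<alpha> b u ` {1..u} = {}"
  proof (rule ccontr)
    assume "matA \<alpha> b u ` {1..u} \<inter> matB \<alpha> b u ` {1..u} \<noteq> {}"
    then obtain x y where xy: "x \<in> {1..u}" "y \<in> {1..u}" "matA \<alpha> b u x = matB \<alpha> b u y" by blast
    then have "matA \<alpha> b u x $ 0 $ 0 = matB \<alpha> b u y $ 0 $ 0" by simp
    then have "4*x-1 = 4*y-4*u-1" by (simp add: matA_def matB_def m3_00)
    then show False using xy(1,2) by simp
  qed
  have fin: "finite AA" by (simp add: AA_def)
  have card: "card AA = nat (2*u)"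
  proof -
    have "card AA = card (matA \<alpha> b u ` {1..u}) + card (matB \<alpha> b u ` {1..u})"
      unfolding AA_def using disj by (simp add: card_Un_disjoint)
    also have "\<dots> = nat u + nat u" using injA injB by (simp add: card_image)
    also have "\<dots> = nat (2*u)" using u by simp
    finally show ?thesis .
  qed
  have sumeq: "(\<Sum>A\<in>AA. abs_entries A) = (\<Sum>i\<in>{1..u}. mset (vals \<alpha> b u i))"
  proof -
    have "(\<Sum>A\<in>AA. abs_entries A) = (\<Sum>A\<in>matA \<alpha> b u ` {1..u}. abs_entries A) + (\<Sum>A\<in>matB \<alpha> b u ` {1..u}. abs_entries A)"
      unfolding AA_def by (rule sum.union_disjoint) (use disj in auto)
    also have "\<dots> = (\<Sum>i\<in>{1..u}. abs_entries (matA \<alpha> b u i)) + (\<Sum>i\<in>{1..u}. abs_entries (matB \<alpha> b u i))"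
      using injA injB by (simp add: sum.reindex)
    also have "\<dots> = (\<Sum>i\<in>{1..u}. abs_entries (matA \<alpha> b u i) + abs_entries (matB \<alpha> b u i))"
      by (simp add: sum.distrib)
    also have "\<dots> = (\<Sum>i\<in>{1..u}. mset (vals \<alpha> b u i))"
    proof (rule sum.cong)
      fix i assume "i \<in> {1..u}"
      then show "abs_entries (matA \<alpha> b u i) + abs_entries (matB \<alpha> b u i) = mset (vals \<alpha> b u i)"
        using al0 hb by (intro absAB) auto
    qed simp
    finally show ?thesis .
  qed
  have VR: "V \<alpha> b u = Rs u b"
  proof
    show "V \<alpha> b u \<subseteq> Rs u b" using V_in al0 hb by blast
    show "Rs u b \<subseteq> V \<alpha> b u"
    proof
      fix x assume "x \<in> Rs u b"
      then consider "x \<in> step_interval 1 (16 * u - 1) 2" | "x \<in> step_interval 2 (8 * u - 2) 4"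
        | "x \<in> step_interval (b + 1) (b + 4 * u) 1" | "x \<in> step_interval (b + 10 * u + 1) (b + 12 * u) 1"
        | "x \<in> step_interval (b + 16 * u + 1) (b + 18 * u) 1"
        unfolding Rs_def by blast
      then show "x \<in> V \<alpha> b u"
      proof cases
        case 1
        then have h: "1 \<le> x" "x \<le> 16*u-1" "2 dvd (x-1)" by (simp_all add: step_mem)
        show ?thesis using al cov1_0[OF u h] cov1_1[OF u h] by auto
      next
        case 2
        then have h: "2 \<le> x" "x \<le> 8*u-2" "4 dvd (x-2)" by (simp_all add: step_mem)
        show ?thesis using al cov2_0[OF u h] cov2_1[OF u h] by auto
      next
        case 3
        then have h: "b+1 \<le> x" "x \<le> b+4*u" by (simp_all add: step_mem)
        show ?thesis using cov3[OF u h] by blast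
      next
        case 4
        then have h: "b+10*u+1 \<le> x" "x \<le> b+12*u" by (simp_all add: step_mem)
        show ?thesis using cov4[OF u h] by blast
      next
        case 5
        then have h: "b+16*u+1 \<le> x" "x \<le> b+18*u" by (simp_all add: step_mem)
        show ?thesis using cov5[OF u h] by blast
      qed
    qed
  qed
  have setM: "set_mset (\<Sum>i\<in>{1..u}. mset (vals \<alpha> b u i)) = Rs u b"
    using VR by (simp add: set_mset_sum V_def)
  have sizeM: "size (\<Sum>i\<in>{1..u}. mset (vals \<alpha> b u i)) = card (Rs u b)"
    using Rs_card[OF u hb] by (simp add: vals_def)
  have Meq: "(\<Sum>i\<in>{1..u}. mset (vals \<alpha> b u i)) = mset_set (Rs u b)"
    by (rule mset_eq_mset_set[OF Rs_fin setM sizeM])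
  have rc: "\<forall>A\<in>AA. row_sums A = [0, 0, 0] \<and> col_sums A = [4 * \<alpha>, -2 * \<alpha>, -2 * \<alpha>]"
    unfolding AA_def using A_rc B_rc by auto
  show ?thesis
    apply (intro exI[of _ AA] conjI)
       apply (fact fin)
      apply (fact card)
     apply (simp only: sumeq Meq Rs_def)
    apply (fact rc)
    done
qed

end
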